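(* Let $V$ be a finite set, $C=(C_R)_{R\subseteq V}$ non-negative capacities and $D=(D_S)_{S\subseteq V}$ non-negative demands. Then \[ \mathrm{MinHypCut}(V,C,D)=\min_{\delta\in\Delta_1(V)}\frac{C\cdot\delta}{D\cdot\delta}, \] where $\Delta_1(V)$ is the set of all $\ell_1$-embeddable diversities on $V$.
   Context: A diversity on $V$ is a function $\delta$ from subsets of $V$ to $\mathbb{R}$ with $\delta(A)\ge 0$, $\delta(A)=0$ whenever $|A|\le 1$ (values $0$ on larger sets are allowed), and $\delta(A\cup B)+\delta(B\cup C)\ge\delta(A\cup C)$ whenever $B\neq\emptyset$. Write $C\cdot\delta=\sum_{R\subseteq V}C_R\delta(R)$ and $D\cdot\delta=\sum_{S\subseteq V}D_S\delta(S)$; quotients are considered only where the denominator is nonzero. The $\ell_1^m$ diversity is $(\mathbb{R}^m,\delta_1)$ with $\delta_1(A)=\sum_{i=1}^m\max\{|a_i-b_i|:a,b\in A\}$; a diversity $\delta$ on $V$ is $\ell_1$-embeddable if there are $m$ and $\phi:V\to\mathbb{R}^m$ with $\delta(A)=\delta_1(\phi(A))$ for all $A\subseteq V$. For $U\subseteq V$ let $\partial U$ be the set of subsets of $V$ meeting both $U$ and $V\setminus U$, and $\mathrm{MinHypCut}(V,C,D)=\min_{U\subseteq V}\frac{\sum_{A\in\partial U}C_A}{\sum_{S\in\partial U}D_S}$. *)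

theory Defs
  imports Complex_Main
begin

definition diversity :: "'a set \<Rightarrow> ('a set \<Rightarrow> real) \<Rightarrow> bool" where
  "diversity V \<delta> \<longleftrightarrow>
     (\<forall>A. A \<subseteq> V \<longrightarrow> \<delta> A \<ge> 0) \<and>
     (\<forall>A. A \<subseteq> V \<longrightarrow> card A \<le> 1 \<longrightarrow> \<delta> A = 0) \<and>
     (\<forall>A B C. A \<subseteq> V \<longrightarrow> B \<subseteq> V \<longrightarrow> C \<subseteq> V \<longrightarrow> B \<noteq> {} \<longrightarrow>
        \<delta> (A \<union> B) + \<delta> (B \<union> C) \<ge> \<delta> (A \<union> C))"

text \<open>The l1^m diversity of a finite set of points of R^m (points as nat \<Rightarrow> real,
  only coordinates i < m matter); the empty set gets diversity 0.\<close>
definition delta1 :: "nat \<Rightarrow> (nat \<Rightarrow> real) set \<Rightarrow> real" where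
  "delta1 m P = (\<Sum>i<m. if P = {} then 0
                         else Max {\<bar>a i - b i\<bar> | a b. a \<in> P \<and> b \<in> P})"

definition l1_embeddable :: "'a set \<Rightarrow> ('a set \<Rightarrow> real) \<Rightarrow> bool" where
  "l1_embeddable V \<delta> \<longleftrightarrow>
     (\<exists>(m::nat) (\<phi>::'a \<Rightarrow> nat \<Rightarrow> real). \<forall>A. A \<subseteq> V \<longrightarrow> \<delta> A = delta1 m (\<phi> ` A))"

definition Delta1 :: "'a set \<Rightarrow> ('a set \<Rightarrow> real) set" where
  "Delta1 V = {\<delta>. diversity V \<delta> \<and> l1_embeddable V \<delta>}"

definition dot :: "'a set \<Rightarrow> ('a set \<Rightarrow> real) \<Rightarrow> ('a set \<Rightarrow> real) \<Rightarrow> real" where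
  "dot V C \<delta> = (\<Sum>R\<in>Pow V. C R * \<delta> R)"

definition boundary :: "'a set \<Rightarrow> 'a set \<Rightarrow> 'a set set" where
  "boundary V U = {A. A \<subseteq> V \<and> A \<inter> U \<noteq> {} \<and> A \<inter> (V - U) \<noteq> {}}"

definition MinHypCut :: "'a set \<Rightarrow> ('a set \<Rightarrow> real) \<Rightarrow> ('a set \<Rightarrow> real) \<Rightarrow> real" where
  "MinHypCut V C D = Min {(\<Sum>A\<in>boundary V U. C A) / (\<Sum>S\<in>boundary V U. D S) | U.
                           U \<subseteq> V \<and> (\<Sum>S\<in>boundary V U. D S) \<noteq> 0}"

end

theory Submission imports Defs "HOL-Analysis.Analysis" begin

definition cutind :: "('a \<Rightarrow> real) \<Rightarrow> real \<Rightarrow> 'a set \<Rightarrow> real" where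
 "cutind h t A = (if (\<exists>a\<in>A. h a \<le> t) \<and> (\<exists>b\<in>A. t < h b) then 1 else 0)"

definition spread :: "('a \<Rightarrow> real) \<Rightarrow> 'a set \<Rightarrow> real" where
 "spread h A = (if A = {} then 0 else Max (h`A) - Min (h`A))"

lemma ind_interval: "(a::real) \<le> b \<Longrightarrow> ((\<lambda>t. if t \<in> {a..b} then 1 else 0) has_integral (b - a)) UNIV"
proof -
  assume "a \<le> b"
  have "((\<lambda>t. 1::real) has_integral (b - a)) {a..b}" using has_integral_const_real[of "1::real" a b] \<open>a \<le> b\<close> by simp
  then show ?thesis by (subst has_integral_restrict_UNIV)
qed

lemma cutind_integral:
  assumes "finite A"
  shows "((\<lambda>t. cutind h t A) has_integral spread h A) UNIV"
proof (cases "A = {}")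
  case True
  then show ?thesis by (simp add: cutind_def spread_def)
next
  case False
  let ?a = "Min (h`A)" and ?b = "Max (h`A)"
  have fin: "finite (h`A)" "h`A \<noteq> {}" using assms False by auto
  have ab: "?a \<le> ?b" using fin by (meson Max_ge Min_le ex_in_conv order_trans)
  have eq: "cutind h t A = (if t \<in> {?a..?b} then 1 else 0)" if "t \<in> UNIV - {?b}" for t
  proof -
    have "(\<exists>x\<in>A. h x \<le> t) \<longleftrightarrow> ?a \<le> t" using fin by (auto simp: Min_le_iff)
    moreover have "(\<exists>x\<in>A. t < h x) \<longleftrightarrow> t < ?b" using fin by (auto simp: Max_gr_iff)
    ultimately show ?thesis using that by (auto simp: cutind_def)
  qed
  have "((\<lambda>t. if t \<in> {?a..?b} then 1 else 0) has_integral (?b - ?a)) UNIV" using ind_interval ab by blast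
  then have "((\<lambda>t. cutind h t A) has_integral (?b - ?a)) UNIV"
    using has_integral_spike_finite_eq[of "{?b}" UNIV "\<lambda>t. cutind h t A" "\<lambda>t. if t \<in> {?a..?b} then 1 else 0"] eq by auto
  then show ?thesis using False by (simp add: spread_def)
qed

lemma maxdiff:
  fixes g :: "'b \<Rightarrow> real"
  assumes "finite P" "P \<noteq> {}"
  shows "Max {\<bar>g a - g b\<bar> | a b. a \<in> P \<and> b \<in> P} = Max (g`P) - Min (g`P)"
proof (rule Max_eqI)
  have "{\<bar>g a - g b\<bar> | a b. a \<in> P \<and> b \<in> P} = (\<lambda>(a,b). \<bar>g a - g b\<bar>) ` (P \<times> P)" by auto
  then show "finite {\<bar>g a - g b\<bar> | a b. a \<in> P \<and> b \<in> P}" using assms by simp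
  have f: "finite (g`P)" "g`P \<noteq> {}" using assms by auto
  show "y \<le> Max (g`P) - Min (g`P)" if yin: "y \<in> {\<bar>g a - g b\<bar> | a b. a \<in> P \<and> b \<in> P}" for y
  proof -
    obtain a b where y: "y = \<bar>g a - g b\<bar>" "a \<in> P" "b \<in> P" using yin by blast
    have "g a \<le> Max (g`P)" "g b \<le> Max (g`P)" "Min (g`P) \<le> g a" "Min (g`P) \<le> g b" using f y by auto
    then show ?thesis using y by auto
  qed
  obtain a where a: "a \<in> P" "g a = Max (g`P)" using f Max_in by (metis imageE)
  obtain b where b: "b \<in> P" "g b = Min (g`P)" using f Min_in by (metis imageE)
  have "Min (g`P) \<le> Max (g`P)" using f by (meson Max_ge Min_le ex_in_conv order_trans)
  then show "Max (g`P) - Min (g`P) \<in> {\<bar>g a - g b\<bar> | a b. a \<in> P \<and> b \<in> P}"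
  proof -
    have "Max (g`P) - Min (g`P) = \<bar>g a - g b\<bar>" using a b \<open>Min (g`P) \<le> Max (g`P)\<close> by simp
    then show ?thesis using a b by blast
  qed
qed

lemma delta1_spread:
  assumes "finite A"
  shows "delta1 m (\<phi> ` A) = (\<Sum>i<m. spread (\<lambda>v. \<phi> v i) A)"
  unfolding delta1_def
proof (rule sum.cong[OF refl])
  fix i
  show "(if \<phi> ` A = {} then 0 else Max {\<bar>a i - b i\<bar> | a b. a \<in> \<phi> ` A \<and> b \<in> \<phi> ` A}) = spread (\<lambda>v. \<phi> v i) A"
  proof (cases "A = {}")
    case True then show ?thesis by (simp add: spread_def)
  next
    case False
    then have "Max {\<bar>a i - b i\<bar> | a b. a \<in> \<phi> ` A \<and> b \<in> \<phi> ` A} = Max ((\<lambda>a. a i)`(\<phi>`A)) - Min ((\<lambda>a. a i)`(\<phi>`A))"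
      using maxdiff[of "\<phi>`A" "\<lambda>a. a i"] assms by auto
    then show ?thesis using False by (simp add: spread_def image_image)
  qed
qed

lemma cut_sum:
  fixes C :: "'a set \<Rightarrow> real"
  assumes "finite V"
  shows "(\<Sum>R\<in>Pow V. C R * (if R \<in> boundary V U then 1 else 0)) = (\<Sum>A\<in>boundary V U. C A)"
proof -
  have "(\<Sum>R\<in>Pow V. C R * (if R \<in> boundary V U then 1 else 0)) = (\<Sum>R\<in>Pow V. if R \<in> boundary V U then C R else 0)"
    by (rule sum.cong) auto
  also have "\<dots> = (\<Sum>R\<in>Pow V \<inter> boundary V U. C R)" using assms by (simp add: sum.inter_restrict)
  also have "Pow V \<inter> boundary V U = boundary V U" by (auto simp: boundary_def)
  finally show ?thesis .
qed

lemma cutind_boundary: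
  assumes "R \<subseteq> V"
  shows "cutind h t R = (if R \<in> boundary V {v\<in>V. h v \<le> t} then 1 else 0)"
  using assms unfolding cutind_def boundary_def by (auto simp: not_le) 

theorem proposition17:
  fixes V :: "'a set" and C D :: "'a set \<Rightarrow> real"
  assumes "finite V"
    and "\<forall>R. R \<subseteq> V \<longrightarrow> C R \<ge> 0"
    and "\<forall>S. S \<subseteq> V \<longrightarrow> D S \<ge> 0"
    and "\<exists>U. U \<subseteq> V \<and> (\<Sum>S\<in>boundary V U. D S) \<noteq> 0"
  shows "(\<exists>\<delta>\<in>Delta1 V. dot V D \<delta> \<noteq> 0 \<and> dot V C \<delta> / dot V D \<delta> = MinHypCut V C D) \<and>
         (\<forall>\<delta>\<in>Delta1 V. dot V D \<delta> \<noteq> 0 \<longrightarrow> MinHypCut V C D \<le> dot V C \<delta> / dot V D \<delta>)"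
proof -
  let ?cC = "\<lambda>U. \<Sum>A\<in>boundary V U. C A"
  let ?cD = "\<lambda>U. \<Sum>S\<in>boundary V U. D S"
  let ?S = "{?cC U / ?cD U | U. U \<subseteq> V \<and> ?cD U \<noteq> 0}"
  define M where "M = MinHypCut V C D"
  have M: "M = Min ?S" unfolding M_def MinHypCut_def by simp
  have finS: "finite ?S"
    by (rule finite_subset[of _ "(\<lambda>U. ?cC U / ?cD U) ` Pow V"]) (use assms(1) in auto)
  have neS: "?S \<noteq> {}" using assms(4) by auto
  have bsub: "boundary V U \<subseteq> Pow V" for U by (auto simp: boundary_def)
  have cDnn: "?cD U \<ge> 0" for U using assms(3) bsub by (intro sum_nonneg) auto
  have cCnn: "?cC U \<ge> 0" for U using assms(2) bsub by (intro sum_nonneg) auto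
  have key: "M * ?cD U \<le> ?cC U" if "U \<subseteq> V" for U
  proof (cases "?cD U = 0")
    case True then show ?thesis using cCnn[of U] by simp
  next
    case False
    then have "M \<le> ?cC U / ?cD U" unfolding M using finS that by (intro Min_le) auto
    moreover have "?cD U > 0" using False cDnn[of U] by linarith
    ultimately show ?thesis by (simp add: pos_le_divide_eq)
  qed
  show ?thesis
  proof
    have "M \<in> ?S" using Min_in[OF finS neS] M by simp
    then obtain U where U: "U \<subseteq> V" "?cD U \<noteq> 0" "M = ?cC U / ?cD U"
      by blast
    define \<delta> where "\<delta> A = (if A \<inter> U \<noteq> {} \<and> A - U \<noteq> {} then 1 else (0::real))" for A
    have bd: "\<delta> R = (if R \<in> boundary V U then 1 else 0)" if "R \<in> Pow V" for R
      using that by (auto simp: \<delta>_def boundary_def)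
    have dots: "dot V X \<delta> = (\<Sum>A\<in>boundary V U. X A)" for X
    proof -
      have "dot V X \<delta> = (\<Sum>R\<in>Pow V. X R * (if R \<in> boundary V U then 1 else 0))"
        unfolding dot_def by (rule sum.cong[OF refl]) (simp add: bd)
      also have "\<dots> = (\<Sum>A\<in>boundary V U. X A)" by (rule cut_sum[OF assms(1)])
      finally show ?thesis .
    qed
    have div: "diversity V \<delta>"
      unfolding diversity_def
    proof (intro conjI allI impI)
      fix A assume "A \<subseteq> V"
      show "\<delta> A \<ge> 0" by (simp add: \<delta>_def)
    next
      fix A assume A: "A \<subseteq> V" "card A \<le> 1"
      show "\<delta> A = 0"
      proof (rule ccontr)
        assume "\<delta> A \<noteq> 0"
        then obtain a b where "a \<in> A" "b \<in> A" "a \<in> U" "b \<notin> U" by (auto simp: \<delta>_def split: if_splits)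
        then have "{a,b} \<subseteq> A" "a \<noteq> b" by auto
        then have "card {a,b} \<le> card A" using A assms(1) finite_subset by (metis card_mono)
        then show False using \<open>a \<noteq> b\<close> A by simp
      qed
    next
      fix A B Ca :: "'a set" assume B: "B \<noteq> {}"
      have nn: "\<delta> X \<ge> 0" for X by (simp add: \<delta>_def)
      show "\<delta> (A \<union> Ca) \<le> \<delta> (A \<union> B) + \<delta> (B \<union> Ca)"
      proof (cases "(A \<union> Ca) \<inter> U \<noteq> {} \<and> (A \<union> Ca) - U \<noteq> {}")
        case False
        have "\<delta> (A \<union> Ca) = 0" unfolding \<delta>_def by (rule if_not_P[OF False])
        then show ?thesis using nn[of "A \<union> B"] nn[of "B \<union> Ca"] by linarith
      next
        case True
        have "((A \<union> B) \<inter> U \<noteq> {} \<and> (A \<union> B) - U \<noteq> {}) \<or> ((B \<union> Ca) \<inter> U \<noteq> {} \<and> (B \<union> Ca) - U \<noteq> {})"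
          using True B by blast
        then have "\<delta> (A \<union> B) = 1 \<or> \<delta> (B \<union> Ca) = 1"
          unfolding \<delta>_def by (metis (no_types, lifting) if_P)
        moreover have "\<delta> (A \<union> Ca) \<le> 1" by (simp add: \<delta>_def)
        ultimately show ?thesis using nn[of "A \<union> B"] nn[of "B \<union> Ca"] by linarith
      qed
    qed
    have emb: "l1_embeddable V \<delta>"
      unfolding l1_embeddable_def
    proof (intro exI allI impI)
      fix A assume A: "A \<subseteq> V"
      let ?h = "\<lambda>v. if v \<in> U then 1 else (0::real)"
      have "finite A" using A assms(1) finite_subset by blast
      have "delta1 1 ((\<lambda>v i. ?h v) ` A) = spread ?h A"
        using delta1_spread[OF \<open>finite A\<close>, of 1 "\<lambda>v i. ?h v"] by simp
      also have "\<dots> = \<delta> A"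
      proof (cases "A \<inter> U \<noteq> {} \<and> A - U \<noteq> {}")
        case True
        then have "?h ` A = {0,1}" by force
        then show ?thesis using True by (auto simp: spread_def \<delta>_def)
      next
        case False
        then consider "A = {}" | "A \<noteq> {}" "A \<subseteq> U" | "A \<noteq> {}" "A \<inter> U = {}" by blast
        then show ?thesis
        proof cases
          case 1 then show ?thesis by (simp add: spread_def \<delta>_def)
        next
          case 2 then have "?h ` A = {1}" by auto
          then show ?thesis using 2 by (auto simp: spread_def \<delta>_def)
        next
          case 3 then have "?h ` A = {0}" by auto
          then show ?thesis using 3 by (auto simp: spread_def \<delta>_def)
        qed
      qed
      finally show "\<delta> A = delta1 1 ((\<lambda>v i. ?h v) ` A)" by simp
    qed
    show "\<exists>\<delta>\<in>Delta1 V. dot V D \<delta> \<noteq> 0 \<and> dot V C \<delta> / dot V D \<delta> = MinHypCut V C D"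
      using div emb U dots[of D] dots[of C] M_def by (intro bexI[of _ \<delta>]) (auto simp: Delta1_def)
  next
    show "\<forall>\<delta>\<in>Delta1 V. dot V D \<delta> \<noteq> 0 \<longrightarrow> MinHypCut V C D \<le> dot V C \<delta> / dot V D \<delta>"
    proof (intro ballI impI)
      fix \<delta> assume d: "\<delta> \<in> Delta1 V" "dot V D \<delta> \<noteq> 0"
      then obtain m \<phi> where \<phi>: "\<forall>A. A \<subseteq> V \<longrightarrow> \<delta> A = delta1 m (\<phi> ` A)"
        by (auto simp: Delta1_def l1_embeddable_def)
      have dnn0: "\<forall>A. A \<subseteq> V \<longrightarrow> \<delta> A \<ge> 0" using d(1) unfolding Delta1_def diversity_def by simp
      have dnn: "\<delta> A \<ge> 0" if "A \<subseteq> V" for A using dnn0 that by blast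
      have \<delta>sp: "\<delta> R = (\<Sum>i<m. spread (\<lambda>v. \<phi> v i) R)" if "R \<in> Pow V" for R
        using \<phi> that delta1_spread[of R m \<phi>] assms(1) finite_subset by auto
      have dotsp: "dot V X \<delta> = (\<Sum>i<m. \<Sum>R\<in>Pow V. X R * spread (\<lambda>v. \<phi> v i) R)" for X
      proof -
        have "dot V X \<delta> = (\<Sum>R\<in>Pow V. \<Sum>i<m. X R * spread (\<lambda>v. \<phi> v i) R)"
          unfolding dot_def by (rule sum.cong) (auto simp: \<delta>sp sum_distrib_left)
        also have "\<dots> = (\<Sum>i<m. \<Sum>R\<in>Pow V. X R * spread (\<lambda>v. \<phi> v i) R)" by (rule sum.swap)
        finally show ?thesis .
      qed
      have coord: "M * (\<Sum>R\<in>Pow V. D R * spread h R) \<le> (\<Sum>R\<in>Pow V. C R * spread h R)" for h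
      proof -
        have int: "((\<lambda>t. \<Sum>R\<in>Pow V. X R * cutind h t R) has_integral (\<Sum>R\<in>Pow V. X R * spread h R)) UNIV" for X
          using assms(1) finite_subset
          by (intro has_integral_sum has_integral_mult_right cutind_integral) auto
        have pt: "(\<Sum>R\<in>Pow V. X R * cutind h t R) = (\<Sum>A\<in>boundary V {v\<in>V. h v \<le> t}. X A)" for X t
        proof -
          have "(\<Sum>R\<in>Pow V. X R * cutind h t R) = (\<Sum>R\<in>Pow V. X R * (if R \<in> boundary V {v\<in>V. h v \<le> t} then 1 else 0))"
            by (rule sum.cong) (auto simp: cutind_boundary[of _ V])
          then show ?thesis using cut_sum[OF assms(1)] by simp
        qed
        show ?thesis
        proof (rule has_integral_le)
          show "((\<lambda>t. M * (\<Sum>R\<in>Pow V. D R * cutind h t R)) has_integral M * (\<Sum>R\<in>Pow V. D R * spread h R)) UNIV"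
            by (intro has_integral_mult_right int)
          show "((\<lambda>t. \<Sum>R\<in>Pow V. C R * cutind h t R) has_integral (\<Sum>R\<in>Pow V. C R * spread h R)) UNIV"
            by (rule int)
          fix t
          show "M * (\<Sum>R\<in>Pow V. D R * cutind h t R) \<le> (\<Sum>R\<in>Pow V. C R * cutind h t R)"
            unfolding pt by (rule key) auto
        qed
      qed
      have "M * dot V D \<delta> = (\<Sum>i<m. M * (\<Sum>R\<in>Pow V. D R * spread (\<lambda>v. \<phi> v i) R))"
        unfolding dotsp by (rule sum_distrib_left)
      also have "\<dots> \<le> dot V C \<delta>"
        unfolding dotsp by (rule sum_mono, rule coord)
      finally have le: "M * dot V D \<delta> \<le> dot V C \<delta>" .
      have "dot V D \<delta> \<ge> 0" unfolding dot_def using assms(3) dnn by (intro sum_nonneg mult_nonneg_nonneg) auto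
      then have "dot V D \<delta> > 0" using d(2) by linarith
      then show "MinHypCut V C D \<le> dot V C \<delta> / dot V D \<delta>" using le M_def by (simp add: pos_le_divide_eq)
    qed
  qed
qed

end
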